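(* Let $(S,\sqcup)$ be a left regular band and let $I$ be a $\lesssim$-ideal of $S$ that is relatively maximal with respect to not containing $d\in S$. If $a\in S$ and $a\notin I$, then there exists $i\in I$ such that $d\lesssim a\sqcup i$.
   Context: A left regular band is a set $S$ with a binary operation $\sqcup$ satisfying $a\sqcup(b\sqcup c)=(a\sqcup b)\sqcup c$, $a\sqcup a=a$, $a\sqcup b=(a\sqcup b)\sqcup a$. Write $a\lesssim b$ iff $b\sqcup a=b$ (a quasiorder). A $\lesssim$-ideal is a non-empty subset $I\subseteq S$ that is a down-set under $\lesssim$ and satisfies $i\sqcup j\in I$ for all $i,j\in I$. For $d\in S$, a $\lesssim$-ideal $I$ is relatively maximal with respect to not containing $d$ if $d\notin I$ and no $\lesssim$-ideal properly containing $I$ omits $d$. *)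

theory Defs
  imports Main
begin

definition left_regular_band :: "('a \<Rightarrow> 'a \<Rightarrow> 'a) \<Rightarrow> bool" where
  "left_regular_band j \<longleftrightarrow>
     (\<forall>a b c. j a (j b c) = j (j a b) c) \<and>
     (\<forall>a. j a a = a) \<and>
     (\<forall>a b. j a b = j (j a b) a)"

definition lrb_le :: "('a \<Rightarrow> 'a \<Rightarrow> 'a) \<Rightarrow> 'a \<Rightarrow> 'a \<Rightarrow> bool" where
  "lrb_le j a b \<longleftrightarrow> j b a = b"

definition lrb_ideal :: "('a \<Rightarrow> 'a \<Rightarrow> 'a) \<Rightarrow> 'a set \<Rightarrow> bool" where
  "lrb_ideal j I \<longleftrightarrow>
     I \<noteq> {} \<and>
     (\<forall>a b. b \<in> I \<and> lrb_le j a b \<longrightarrow> a \<in> I) \<and>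
     (\<forall>i\<in>I. \<forall>k\<in>I. j i k \<in> I)"

definition rel_max_not_containing :: "('a \<Rightarrow> 'a \<Rightarrow> 'a) \<Rightarrow> 'a \<Rightarrow> 'a set \<Rightarrow> bool" where
  "rel_max_not_containing j d I \<longleftrightarrow>
     lrb_ideal j I \<and> d \<notin> I \<and>
     (\<forall>J. lrb_ideal j J \<and> I \<subset> J \<longrightarrow> d \<in> J)"

end

theory Submission
  imports Defs
begin

theorem lemma2p4:
  fixes j :: "'a \<Rightarrow> 'a \<Rightarrow> 'a" and I :: "'a set" and d a :: 'a
  assumes "left_regular_band j"
    and "rel_max_not_containing j d I"
    and "a \<notin> I"
  shows "\<exists>i\<in>I. lrb_le j d (j a i)"
proof -
  have as: "\<And>x y z. j (j x y) z = j x (j y z)" and id: "\<And>x. j x x = x"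
    and lr2: "\<And>x y. j (j x y) x = j x y"
    using assms(1) unfolding left_regular_band_def by auto
  have lr: "\<And>x y. j x (j y x) = j x y" using lr2 as by simp
  have idI: "lrb_ideal j I" and dI: "d \<notin> I"
    and mx: "\<And>J. lrb_ideal j J \<Longrightarrow> I \<subset> J \<Longrightarrow> d \<in> J"
    using assms(2) unfolding rel_max_not_containing_def by blast+
  have ne: "I \<noteq> {}" and down: "\<And>x y. y \<in> I \<Longrightarrow> lrb_le j x y \<Longrightarrow> x \<in> I"
    and cl: "\<And>x y. x \<in> I \<Longrightarrow> y \<in> I \<Longrightarrow> j x y \<in> I"
    using idI unfolding lrb_ideal_def by blast+
  have tr: "lrb_le j x z" if "lrb_le j x y" "lrb_le j y z" for x y z
  proof -
    have "j z x = j (j z y) x" using that unfolding lrb_le_def by simp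
    also have "\<dots> = j z (j y x)" by (simp add: as)
    also have "\<dots> = z" using that unfolding lrb_le_def by simp
    finally show ?thesis unfolding lrb_le_def .
  qed
  have ext: "lrb_le j x (j u v)" if "lrb_le j x u" for x u v
  proof -
    have "j (j u v) x = j (j (j u v) u) x" by (simp only: lr2)
    also have "\<dots> = j (j u v) (j u x)" by (simp add: as)
    also have "\<dots> = j u v" using that lr[of u v] unfolding lrb_le_def by (simp add: as)
    finally show ?thesis unfolding lrb_le_def .
  qed
  have sub: "lrb_le j (j a k) (j (j a i) k)" for i k
  proof -
    have "j (j (j a i) k) (j a k) = j (j (j a (j i k)) a) k" by (simp add: as)
    also have "\<dots> = j (j a (j i k)) k" by (simp only: lr2)
    also have "\<dots> = j (j a i) k" by (simp add: as id)
    finally show ?thesis unfolding lrb_le_def .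
  qed
  define J where "J = {x. \<exists>i\<in>I. lrb_le j x (j a i)}"
  obtain i0 where i0: "i0 \<in> I" using ne by blast
  have aJ: "a \<in> J" unfolding J_def lrb_le_def using i0 lr2 by blast
  have IJ: "I \<subseteq> J"
  proof
    fix x assume x: "x \<in> I"
    have "j (j a x) x = j a x" by (simp add: as id)
    then show "x \<in> J" unfolding J_def lrb_le_def using x by blast
  qed
  have "lrb_ideal j J"
    unfolding lrb_ideal_def
  proof (intro conjI allI impI ballI)
    show "J \<noteq> {}" using aJ by blast
  next
    fix x y assume "y \<in> J \<and> lrb_le j x y"
    then show "x \<in> J" unfolding J_def using tr by blast
  next
    fix x y assume "x \<in> J" "y \<in> J"
    then obtain i k where i: "i \<in> I" "lrb_le j x (j a i)" and k: "k \<in> I" "lrb_le j y (j a k)"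
      unfolding J_def by blast
    have "lrb_le j x (j a (j i k))" using ext[OF i(2), of k] by (simp add: as)
    moreover have "lrb_le j y (j a (j i k))" using tr[OF k(2) sub[of k i]] by (simp add: as)
    ultimately have "lrb_le j (j x y) (j a (j i k))" unfolding lrb_le_def by (simp add: as[symmetric])
    then show "j x y \<in> J" unfolding J_def using cl[OF i(1) k(1)] by blast
  qed
  moreover have "I \<subset> J" using IJ aJ assms(3) by blast
  ultimately have "d \<in> J" using mx by blast
  then show ?thesis unfolding J_def by blast
qed

end
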